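(* Let $u>1$ be an integer, let $r=u+1$, and let $s\ge 2u+2$ be an integer. Let $x$ be a non-negative integer whose $r$-canonical representation is $[x]^r=\binom{n}{r}+\binom{m}{r-1}+\binom{2u-1}{r-2}$. Then for every integer $y$ with $\binom{n}{r}+\binom{m}{r-1}\le y\le x$, $$k_s(k_r\le y)=\binom{n}{s}+\binom{m}{s-1}.$$
   Context: All graphs are finite simple graphs. For a graph $g$ and an integer $r>1$, $k_r(g)$ denotes the number of subgraphs of $g$ isomorphic to the complete graph $K_r$. For $r<s$ and a non-negative integer $x$, $k_s(k_r\le x)$ denotes the maximum of $k_s(g)$ over all graphs $g$ with $k_r(g)\le x$. The $r$-canonical representation $[x]^r$ of a non-negative integer $x$ is obtained greedily: choose $a_r$ as large as possible with $\binom{a_r}{r}\le x$, then $a_{r-1}$ as large as possible with $\binom{a_{r-1}}{r-1}\le x-\binom{a_r}{r}$, and so on, until $x=\binom{a_r}{r}+\binom{a_{r-1}}{r-1}+\dots+\binom{a_{r-j}}{r-j}$; one has $a_r>a_{r-1}>\dots>a_{r-j}$. A binomial coefficient whose top entry is less than its bottom entry is taken to be $0$. *)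

theory Defs
  imports Main
begin

text \<open>Finite simple graphs, with vertices taken from nat (every finite simple graph
  is isomorphic to one of these): a finite vertex set V and a set E of 2-element subsets of V.\<close>
definition simple_graph :: "nat set \<Rightarrow> nat set set \<Rightarrow> bool" where
  "simple_graph V E \<longleftrightarrow> finite V \<and> (\<forall>e\<in>E. e \<subseteq> V \<and> card e = 2)"

definition kcount :: "nat \<Rightarrow> nat set \<Rightarrow> nat set set \<Rightarrow> nat" where
  "kcount r V E = card {S. S \<subseteq> V \<and> card S = r \<and> (\<forall>a\<in>S. \<forall>b\<in>S. a \<noteq> b \<longrightarrow> {a, b} \<in> E)}"

definition kmax :: "nat \<Rightarrow> nat \<Rightarrow> nat \<Rightarrow> nat" where
  "kmax s r x = Sup {kcount s V E | V E. simple_graph V E \<and> kcount r V E \<le> x}"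

fun canon :: "nat \<Rightarrow> nat \<Rightarrow> nat list" where
  "canon 0 x = []"
| "canon (Suc k) x =
     (if x = 0 then []
      else let a = (GREATEST a. a choose (Suc k) \<le> x)
           in a # canon k (x - (a choose (Suc k))))"

end

theory Submission
  imports Defs
begin

definition shadow :: "nat set set \<Rightarrow> nat set set" where
  "shadow F = {G - {x} | G x. G \<in> F \<and> x \<in> G}"

definition unif :: "nat \<Rightarrow> nat set set \<Rightarrow> bool" where
  "unif k F \<longleftrightarrow> finite F \<and> (\<forall>G\<in>F. finite G \<and> card G = k)"

definition cmp :: "nat \<Rightarrow> nat set \<Rightarrow> nat set" where
  "cmp j G = (if j \<in> G \<and> 0 \<notin> G then insert 0 (G - {j}) else G)"

definition Cmp :: "nat \<Rightarrow> nat set set \<Rightarrow> nat set set" where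
  "Cmp j F = {G \<in> F. cmp j G \<in> F} \<union> {cmp j G | G. G \<in> F \<and> cmp j G \<notin> F}"

definition stbl :: "nat set set \<Rightarrow> bool" where
  "stbl F \<longleftrightarrow> (\<forall>G\<in>F. 0 \<notin> G \<longrightarrow> (\<forall>j\<in>G. insert 0 (G - {j}) \<in> F))"

lemma shadow_eq: "shadow F = (\<Union>G\<in>F. (\<lambda>x. G - {x}) ` G)"
  unfolding shadow_def by blast

lemma finite_shadow: "unif k F \<Longrightarrow> finite (shadow F)"
  unfolding shadow_eq unif_def by auto

lemma Cmp_split: "Cmp j F = (F - {G\<in>F. cmp j G \<notin> F}) \<union> cmp j ` {G\<in>F. cmp j G \<notin> F}"
proof -
  have "F - {G\<in>F. cmp j G \<notin> F} = {G \<in> F. cmp j G \<in> F}" by auto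
  moreover have "cmp j ` {G\<in>F. cmp j G \<notin> F} = {cmp j G | G. G \<in> F \<and> cmp j G \<notin> F}" by auto
  ultimately show ?thesis unfolding Cmp_def by (simp only:)
qed

lemma cmp_moved: "cmp j G \<noteq> G \<Longrightarrow> 0 \<in> cmp j G"
  by (simp add: cmp_def split: if_splits)

lemma Cmp_no0: "H \<in> Cmp j F \<Longrightarrow> 0 \<notin> H \<Longrightarrow> H \<in> F \<and> cmp j H \<in> F"
proof -
  assume H: "H \<in> Cmp j F" "0 \<notin> H"
  show ?thesis
  proof (cases "H \<in> F \<and> cmp j H \<in> F")
    case True then show ?thesis .
  next
    case False
    then obtain G where G: "G \<in> F" "cmp j G \<notin> F" "H = cmp j G" using H(1) unfolding Cmp_def by blast
    then have "cmp j G \<noteq> G" by auto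
    then have "0 \<in> H" using cmp_moved G(3) by simp
    then show ?thesis using H(2) by simp
  qed
qed

lemma card_Cmp:
  assumes "finite F" shows "card (Cmp j F) = card F"
proof -
  let ?M = "{G\<in>F. cmp j G \<notin> F}"
  have inj: "inj_on (cmp j) ?M"
  proof (rule inj_onI)
    fix G H assume G: "G \<in> ?M" and H: "H \<in> ?M" and e: "cmp j G = cmp j H"
    have g: "j \<in> G \<and> 0 \<notin> G" using G by (auto simp: cmp_def split: if_splits)
    have h: "j \<in> H \<and> 0 \<notin> H" using H by (auto simp: cmp_def split: if_splits)
    from e g h have "insert 0 (G - {j}) = insert 0 (H - {j})" by (simp add: cmp_def)
    then have "insert 0 (G - {j}) - {0} = insert 0 (H - {j}) - {0}" by simp
    moreover have "insert 0 (G - {j}) - {0} = G - {j}" using g by auto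
    moreover have "insert 0 (H - {j}) - {0} = H - {j}" using h by auto
    ultimately have "G - {j} = H - {j}" by simp
    then have "insert j (G - {j}) = insert j (H - {j})" by simp
    then show "G = H" using g h by (simp add: insert_absorb)
  qed
  have d: "(F - ?M) \<inter> cmp j ` ?M = {}" by auto
  have "card (Cmp j F) = card (F - ?M) + card (cmp j ` ?M)"
    unfolding Cmp_split using assms d by (intro card_Un_disjoint) auto
  also have "\<dots> = card (F - ?M) + card ?M" using card_image[OF inj] by simp
  also have "\<dots> = card F"
  proof -
    have "?M \<subseteq> F" by blast
    moreover have "finite ?M" using assms by auto
    ultimately show ?thesis using assms card_Diff_subset[of ?M F] card_mono[of F ?M] by simp
  qed
  finally show ?thesis .
qed

lemma unif_Cmp: assumes "unif k F" shows "unif k (Cmp j F)"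
proof -
  have "finite (Cmp j F)" using assms unfolding Cmp_split unif_def by auto
  moreover have "finite (cmp j G) \<and> card (cmp j G) = k" if "G \<in> F" for G
  proof -
    have f: "finite G" "card G = k" using assms that unfolding unif_def by auto
    show ?thesis
    proof (cases "j \<in> G \<and> 0 \<notin> G")
      case True
      then have "card G > 0" using f by (auto simp: card_gt_0_iff)
      then show ?thesis using True f by (simp add: cmp_def)
    next
      case False then have "cmp j G = G" unfolding cmp_def by (rule if_not_P)
      then show ?thesis using f by simp
    qed
  qed
  ultimately show ?thesis using assms unfolding unif_def Cmp_def by auto
qed

lemma mem_neq: "a \<in> A \<Longrightarrow> b \<notin> A \<Longrightarrow> a \<noteq> b"
  by blast

lemma shadowI: "G \<in> F \<Longrightarrow> x \<in> G \<Longrightarrow> G - {x} \<in> shadow F"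
  unfolding shadow_def by blast

lemma CmpI1: "G \<in> F \<Longrightarrow> cmp j G \<in> F \<Longrightarrow> G \<in> Cmp j F"
  unfolding Cmp_def by blast

lemma CmpI2: "G \<in> F \<Longrightarrow> cmp j G \<notin> F \<Longrightarrow> cmp j G \<in> Cmp j F"
  unfolding Cmp_def by blast

lemma shadow_Cmp: assumes "j \<noteq> 0" shows "shadow (Cmp j F) \<subseteq> Cmp j (shadow F)"
proof
  fix H assume "H \<in> shadow (Cmp j F)"
  then obtain A x where A: "A \<in> Cmp j F" "x \<in> A" and H: "H = A - {x}" unfolding shadow_def by blast
  show "H \<in> Cmp j (shadow F)"
  proof (cases "A \<in> F \<and> cmp j A \<in> F")
    case True
    have HF: "H \<in> shadow F" using shadowI[OF conjunct1[OF True] A(2)] H by simp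
    have "cmp j H \<in> shadow F"
    proof (cases "j \<in> H \<and> 0 \<notin> H")
      case False then have "cmp j H = H" unfolding cmp_def by (rule if_not_P)
      then show ?thesis using HF by simp
    next
      case c: True
      show ?thesis
      proof (cases "0 \<in> A")
        case False
        have jA: "j \<in> A" using c H by simp
        have e1: "cmp j A = insert 0 (A - {j})" using jA False by (simp add: cmp_def)
        have xj: "x \<noteq> j" using c H by auto
        have x0: "x \<noteq> 0" using mem_neq[OF A(2) False] .
        have e2: "cmp j H = insert 0 (A - {j}) - {x}" using c H xj x0 by (auto simp: cmp_def)
        have xx: "x \<in> cmp j A" using e1 A(2) xj by simp
        show ?thesis using shadowI[OF conjunct2[OF True] xx] e1 e2 by simp
      next
        case z: True
        then have "x = 0" using c H by auto
        then have "cmp j H = A - {j}" using c H z assms by (auto simp: cmp_def)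
        moreover have "j \<in> A" using c H by auto
        ultimately show ?thesis using shadowI[OF conjunct1[OF True]] by simp
      qed
    qed
    then show ?thesis using HF by (rule CmpI1[rotated])
  next
    case False
    then obtain B where B: "B \<in> F" "cmp j B \<notin> F" "A = cmp j B" using A unfolding Cmp_def by blast
    have jB: "j \<in> B" "0 \<notin> B"
    proof -
      have "cmp j B \<noteq> B" using B by auto
      then show "j \<in> B" "0 \<notin> B" unfolding cmp_def by (meson if_not_P)+
    qed
    have Aeq: "A = insert 0 (B - {j})" using B jB by (simp add: cmp_def)
    show ?thesis
    proof (cases "x = 0")
      case True
      then have HB: "H = B - {j}" using Aeq H jB by auto
      have s1: "B - {j} \<in> shadow F" using shadowI[OF B(1) jB(1)] .
      have "cmp j (B - {j}) = B - {j}" by (simp add: cmp_def)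
      then have "cmp j (B - {j}) \<in> shadow F" using s1 by simp
      then show ?thesis using HB s1 by (simp add: CmpI1)
    next
      case False
      have xB: "x \<in> B" "x \<noteq> j" using False A Aeq by auto
      have H': "B - {x} \<in> shadow F" using shadowI[OF B(1) xB(1)] .
      have cH: "cmp j (B - {x}) = H" using H Aeq xB jB False by (auto simp: cmp_def)
      show ?thesis
      proof (cases "H \<in> shadow F")
        case True
        have "0 \<in> H" using H Aeq False by simp
        then have "cmp j H = H" by (simp add: cmp_def)
        then show ?thesis using True by (simp add: CmpI1)
      next
        case False
        then have "cmp j (B - {x}) \<notin> shadow F" using cH by simp
        then have "cmp j (B - {x}) \<in> Cmp j (shadow F)" by (rule CmpI2[OF H'])
        then show ?thesis using cH by simp
      qed
    qed
  qed
qed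

lemma card_shadow_Cmp: assumes "unif k F" "j \<noteq> 0"
  shows "card (shadow (Cmp j F)) \<le> card (shadow F)"
proof -
  have "card (shadow (Cmp j F)) \<le> card (Cmp j (shadow F))"
    using shadow_Cmp[OF assms(2)] finite_shadow[OF assms(1)]
    by (intro card_mono) (auto simp: Cmp_split)
  also have "\<dots> = card (shadow F)" using card_Cmp finite_shadow[OF assms(1)] by blast
  finally show ?thesis .
qed

lemma stabilize:
  "unif k F \<Longrightarrow> \<exists>F'. unif k F' \<and> card F' = card F \<and> card (shadow F') \<le> card (shadow F) \<and> stbl F'"
proof (induction "card {G\<in>F. 0 \<notin> G}" arbitrary: F rule: less_induct)
  case less
  show ?case
  proof (cases "stbl F")
    case True then show ?thesis using less.prems by (intro exI[of _ F]) simp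
  next
    case False
    then obtain G j where G: "G \<in> F" "0 \<notin> G" "j \<in> G" "insert 0 (G - {j}) \<notin> F"
      unfolding stbl_def by blast
    have j0: "j \<noteq> 0" using mem_neq[OF G(3) G(2)] .
    let ?F = "Cmp j F"
    have fin: "finite F" using less.prems unfolding unif_def by auto
    have sub: "{H\<in>?F. 0 \<notin> H} \<subseteq> {H\<in>F. 0 \<notin> H}"
      using Cmp_no0 by blast
    have "cmp j G \<notin> F" using G by (simp add: cmp_def)
    then have "G \<notin> ?F" using Cmp_no0[of G j F] G(2) by blast
    then have "{H\<in>?F. 0 \<notin> H} \<noteq> {H\<in>F. 0 \<notin> H}" using G by blast
    then have "{H\<in>?F. 0 \<notin> H} \<subset> {H\<in>F. 0 \<notin> H}" using sub by (rule psubsetI[rotated])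
    moreover have "finite {H\<in>F. 0 \<notin> H}" using fin by simp
    ultimately have "card {H\<in>?F. 0 \<notin> H} < card {H\<in>F. 0 \<notin> H}"
      by (simp add: psubset_card_mono)
    from less.hyps[OF this unif_Cmp[OF less.prems]] obtain F' where
      "unif k F'" "card F' = card ?F" "card (shadow F') \<le> card (shadow ?F)" "stbl F'" by blast
    moreover have "card ?F = card F" using card_Cmp[OF fin] .
    moreover have "card (shadow ?F) \<le> card (shadow F)" using card_shadow_Cmp[OF less.prems j0] .
    ultimately show ?thesis by (intro exI[of _ F']) simp
  qed
qed

fun val :: "nat \<Rightarrow> nat list \<Rightarrow> nat" where
  "val k [] = 0"
| "val k (a # L) = (a choose k) + (if k = 0 then 0 else val (k - 1) L)"

fun valid :: "nat \<Rightarrow> nat list \<Rightarrow> bool" where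
  "valid k [] = True"
| "valid k (a # L) = (k \<le> a \<and> (\<forall>y\<in>set L. y < a) \<and> (if k = 0 then L = [] else valid (k - 1) L))"

definition dec :: "nat list \<Rightarrow> nat list" where
  "dec L = map (\<lambda>a. a - 1) L"

lemma dec_simps[simp]: "dec [] = []" "dec (a # L) = (a - 1) # dec L"
  by (auto simp: dec_def)

lemma take_dec: "take i (dec L) = dec (take i L)"
  by (simp add: dec_def take_map)

lemma val_take: "j < i \<Longrightarrow> val j (take i L) = val j L"
proof (induction L arbitrary: i j)
  case Nil then show ?case by simp
next
  case (Cons a L)
  then obtain i' where i: "i = Suc i'" by (cases i) auto
  show ?case
  proof (cases "j = 0")
    case True then show ?thesis using i by simp
  next
    case False
    then have "val (j - 1) (take i' L) = val (j - 1) L" using Cons.IH Cons.prems i by simp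
    then show ?thesis using i False by simp
  qed
qed

lemma val0: "val 0 L = (if L = [] then 0 else 1)"
  by (cases L) auto

lemma val0_dec: "val 0 (dec L) = val 0 L"
  by (cases L) auto

lemma pascal:
  "1 \<le> k \<Longrightarrow> (\<forall>y\<in>set (take k L). 1 \<le> y) \<Longrightarrow> val k L = val (k - 1) (dec L) + val k (dec L)"
proof (induction L arbitrary: k)
  case Nil then show ?case by simp
next
  case (Cons a L)
  have a: "1 \<le> a" using Cons.prems by (cases k) auto
  show ?case
  proof (cases "k = 1")
    case True
    then show ?thesis using a by (simp add: val0_dec)
  next
    case False
    then have k2: "2 \<le> k" using Cons.prems by simp
    obtain k' where k': "k = Suc k'" "1 \<le> k'" using k2 by (cases k) auto
    have "\<forall>y\<in>set (take k' L). 1 \<le> y" using Cons.prems k' by auto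
    then have IH: "val k' L = val (k' - 1) (dec L) + val k' (dec L)"
      using Cons.IH[of k'] k' by simp
    obtain a' where a': "a = Suc a'" using a by (cases a) auto
    obtain k'' where k'': "k' = Suc k''" using k' by (cases k') auto
    show ?thesis using IH a' k' k'' by simp
  qed
qed

lemma valid_ge1: "valid k L \<Longrightarrow> \<forall>y\<in>set (take k L). 1 \<le> y"
proof (induction L arbitrary: k)
  case Nil then show ?case by simp
next
  case (Cons a L)
  show ?case
  proof (cases k)
    case 0 then show ?thesis by simp
  next
    case (Suc k') then show ?thesis using Cons by auto
  qed
qed

lemma valid_dec: "1 \<le> k \<Longrightarrow> valid k L \<Longrightarrow> valid (k - 1) (dec (take k L))"
proof (induction L arbitrary: k)
  case Nil then show ?case by simp
next
  case (Cons a L)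
  obtain k' where k': "k = Suc k'" using Cons.prems by (cases k) auto
  have a: "k \<le> a" "\<forall>y\<in>set L. y < a" and vL: "valid k' L" using Cons.prems k' by auto
  have lt: "\<forall>y\<in>set (dec (take k' L)). y < a - 1"
  proof
    fix y assume "y \<in> set (dec (take k' L))"
    then obtain z where z: "z \<in> set (take k' L)" "y = z - 1" by (auto simp: dec_def)
    have "z < a" using z a by (meson in_set_takeD)
    have "1 \<le> z" using valid_ge1[OF vL] z by auto
    then show "y < a - 1" using z \<open>z < a\<close> by simp
  qed
  show ?case
  proof (cases "k' = 0")
    case True then show ?thesis using k' a by simp
  next
    case False
    then have "valid (k' - 1) (dec (take k' L))" using Cons.IH vL by simp
    then show ?thesis using k' a lt False by simp
  qed
qed

lemma tight: "1 \<le> k \<Longrightarrow> valid k (k # R) \<Longrightarrow> val (k - 1) (dec (k # R)) \<le> k"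
proof (induction R arbitrary: k)
  case Nil then show ?case by simp
next
  case (Cons b R)
  show ?case
  proof (cases "k = 1")
    case True then show ?thesis by simp
  next
    case False
    then have k2: "2 \<le> k" using Cons.prems by simp
    obtain k' where k': "k = Suc k'" "1 \<le> k'" using k2 by (cases k) auto
    have b: "b = k'" and v: "valid k' (k' # R)" using Cons.prems k' by auto
    have "val (k' - 1) (dec (k' # R)) \<le> k'" by (rule Cons.IH[OF k'(2) v])
    moreover have "val (k - 1) (dec (k # b # R)) = 1 + val (k' - 1) (dec (k' # R))"
      using k' b by simp
    ultimately show ?thesis using k' by simp
  qed
qed

lemma wlist:
  "1 \<le> k \<Longrightarrow> valid k L \<Longrightarrow> \<exists>L'. valid k L' \<and> val k L' \<le> val k (dec L) + 1 \<and>
     val (k - 1) (dec L) \<le> val (k - 1) L' \<and>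
     (\<forall>y\<in>set L'. y \<le> hd L \<and> (k < hd L \<longrightarrow> y < hd L))"
proof (induction L arbitrary: k)
  case Nil then show ?case by (intro exI[of _ "[]"]) simp
next
  case (Cons a R)
  have ka: "k \<le> a" using Cons.prems by simp
  show ?case
  proof (cases "a = k")
    case True
    have "val (k - 1) (dec (a # R)) \<le> k" using tight Cons.prems True by blast
    moreover have "val (k - 1) [k] = k" using Cons.prems by (cases k) auto
    ultimately show ?thesis using True Cons.prems
      by (intro exI[of _ "[k]"]) simp
  next
    case False
    then have ak: "k < a" using ka by simp
    show ?thesis
    proof (cases "k = 1 \<or> R = []")
      case True
      have "valid k [a - 1]" using ak by (simp; linarith)
      moreover have "val k [a - 1] \<le> val k (dec (a # R)) + 1" using True by auto
      moreover have "val (k - 1) (dec (a # R)) \<le> val (k - 1) [a - 1]"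
        using True by (auto simp: val0)
      ultimately show ?thesis using ak by (intro exI[of _ "[a - 1]"]) auto
    next
      case False
      then have k2: "2 \<le> k" and Rne: "R \<noteq> []" using Cons.prems by auto
      have vR: "valid (k - 1) R" and Ra: "\<forall>y\<in>set R. y < a" using Cons.prems k2 by auto
      have k1: "1 \<le> k - 1" using k2 by simp
      obtain R' where R': "valid (k - 1) R'" "val (k - 1) R' \<le> val (k - 1) (dec R) + 1"
        "val (k - 1 - 1) (dec R) \<le> val (k - 1 - 1) R'"
        "\<forall>y\<in>set R'. y \<le> hd R \<and> (k - 1 < hd R \<longrightarrow> y < hd R)"
        using Cons.IH[OF k1 vR] by blast
      have hR: "hd R < a" "k - 1 \<le> hd R" using Ra Rne vR by (cases R; auto)+
      have lt: "\<forall>y\<in>set R'. y < a - 1"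
      proof
        fix y assume y: "y \<in> set R'"
        show "y < a - 1"
        proof (cases "k - 1 < hd R")
          case True then have "y < hd R" using R'(4) y by blast
          then show ?thesis using hR by linarith
        next
          case False then have "hd R = k - 1" using hR by simp
          moreover have "y \<le> hd R" using R'(4) y by blast
          ultimately show ?thesis using ak k2 by linarith
        qed
      qed
      obtain k' where k': "k = Suc k'" "1 \<le> k'" using k2 by (cases k) auto
      have "k \<le> a - 1" using ak by linarith
      then have "valid k ((a - 1) # R')" using R'(1) lt k' by simp
      moreover have "val k ((a - 1) # R') \<le> val k (dec (a # R)) + 1"
        using R'(2) k' by simp
      moreover have "val (k - 1) (dec (a # R)) \<le> val (k - 1) ((a - 1) # R')"
      proof -
        obtain k'' where "k' = Suc k''" using k' by (cases k') auto
        then show ?thesis using R'(3) k' by simp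
      qed
      moreover have "\<forall>y\<in>set ((a - 1) # R'). y \<le> hd (a # R) \<and> (k < hd (a # R) \<longrightarrow> y < hd (a # R))"
        using lt ak by auto
      ultimately show ?thesis by blast
    qed
  qed
qed

definition lnk :: "nat set set \<Rightarrow> nat set set" where
  "lnk F = {G - {0} | G. G \<in> F \<and> 0 \<in> G}"

definition rst :: "nat set set \<Rightarrow> nat set set" where
  "rst F = {G \<in> F. 0 \<notin> G}"

lemma card_split: assumes "finite F" shows "card F = card (lnk F) + card (rst F)"
proof -
  have e: "F = {G\<in>F. 0 \<in> G} \<union> rst F" unfolding rst_def by auto
  have "card F = card {G\<in>F. 0 \<in> G} + card (rst F)"
    using assms by (subst e, intro card_Un_disjoint) (auto simp: rst_def)
  moreover have "lnk F = (\<lambda>G. G - {0}) ` {G\<in>F. 0 \<in> G}" unfolding lnk_def by auto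
  moreover have "inj_on (\<lambda>G. G - {0}) {G\<in>F. 0 \<in> G}"
  proof (rule inj_onI)
    fix G H assume "G \<in> {G\<in>F. 0 \<in> G}" "H \<in> {G\<in>F. 0 \<in> G}" "G - {0} = H - {0}"
    then have "insert 0 (G - {0}) = insert 0 (H - {0})" "0 \<in> G" "0 \<in> H" by auto
    then show "G = H" by (simp add: insert_absorb)
  qed
  ultimately show ?thesis by (simp add: card_image)
qed

lemma unif_lnk: assumes "unif k F" "1 \<le> k" shows "unif (k - 1) (lnk F)"
proof -
  have "lnk F = (\<lambda>G. G - {0}) ` {G\<in>F. 0 \<in> G}" unfolding lnk_def by auto
  then have "finite (lnk F)" using assms unfolding unif_def by auto
  then show ?thesis using assms unfolding unif_def lnk_def by auto
qed

lemma unif_rst: "unif k F \<Longrightarrow> unif k (rst F)"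
  unfolding unif_def rst_def by auto

lemma shadow_rst: "stbl F \<Longrightarrow> shadow (rst F) \<subseteq> lnk F"
proof
  fix H assume st: "stbl F" and "H \<in> shadow (rst F)"
  then obtain G x where G: "G \<in> F" "0 \<notin> G" "x \<in> G" "H = G - {x}"
    unfolding shadow_def rst_def by blast
  then have "insert 0 (G - {x}) \<in> F" using st unfolding stbl_def by blast
  moreover have "insert 0 (G - {x}) - {0} = H" using G by auto
  ultimately show "H \<in> lnk F" unfolding lnk_def by blast
qed

lemma shadow_lower:
  assumes "unif k F" shows "card (lnk F) + card (shadow (lnk F)) \<le> card (shadow F)"
proof -
  have sub: "lnk F \<union> insert 0 ` shadow (lnk F) \<subseteq> shadow F"
  proof
    fix H assume "H \<in> lnk F \<union> insert 0 ` shadow (lnk F)"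
    then show "H \<in> shadow F"
    proof
      assume "H \<in> lnk F" then show ?thesis unfolding lnk_def shadow_def by blast
    next
      assume "H \<in> insert 0 ` shadow (lnk F)"
      then obtain G x where G: "G \<in> F" "0 \<in> G" "x \<in> G - {0}" "H = insert 0 (G - {0} - {x})"
        unfolding lnk_def shadow_def by blast
      then have "H = G - {x}" by auto
      then show ?thesis using G unfolding shadow_def by blast
    qed
  qed
  have fin: "finite (shadow F)" using finite_shadow[OF assms] .
  have n0: "\<forall>H\<in>shadow (lnk F). 0 \<notin> H" unfolding shadow_def lnk_def by auto
  have inj: "inj_on (insert 0) (shadow (lnk F))"
  proof (rule inj_onI)
    fix G H assume a: "G \<in> shadow (lnk F)" "H \<in> shadow (lnk F)" "insert 0 G = insert 0 H"
    then have "insert 0 G - {0} = insert 0 H - {0}" by simp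
    moreover have "0 \<notin> G" "0 \<notin> H" using n0 a(1,2) by blast+
    ultimately show "G = H" by simp
  qed
  have "card (lnk F \<union> insert 0 ` shadow (lnk F)) = card (lnk F) + card (insert 0 ` shadow (lnk F))"
  proof (rule card_Un_disjoint)
    show "finite (lnk F)" using fin sub by (meson finite_subset le_sup_iff)
    show "finite (insert 0 ` shadow (lnk F))" using fin sub by (meson finite_subset le_sup_iff)
    have "\<forall>H\<in>lnk F. 0 \<notin> H" unfolding lnk_def by blast
    then show "lnk F \<inter> insert 0 ` shadow (lnk F) = {}" by blast
  qed
  also have "\<dots> = card (lnk F) + card (shadow (lnk F))" using inj by (simp add: card_image)
  finally show ?thesis using card_mono[OF fin sub] by simp
qed

lemma lnk_nonempty:
  assumes "stbl F" "unif k F" "1 \<le> k" "F \<noteq> {}" shows "lnk F \<noteq> {}"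
proof -
  obtain G where G: "G \<in> F" using assms by blast
  show ?thesis
  proof (cases "0 \<in> G")
    case True then show ?thesis using G unfolding lnk_def by blast
  next
    case False
    have "G \<noteq> {}" using G assms unfolding unif_def by auto
    then obtain j where "j \<in> G" by blast
    then have "insert 0 (G - {j}) \<in> F" using assms(1) G False unfolding stbl_def by blast
    then show ?thesis unfolding lnk_def by blast
  qed
qed

lemma val_pos: "valid k (a # L) \<Longrightarrow> 1 \<le> val k (a # L)"
  by (simp add: Suc_leI zero_less_binomial)

theorem KK:
  "1 \<le> k \<Longrightarrow> unif k F \<Longrightarrow> valid k L \<Longrightarrow> val k L \<le> card F \<Longrightarrow> val (k - 1) L \<le> card (shadow F)"
proof (induction k arbitrary: F L rule: nat_induct_at_least)
  case base
  show ?case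
  proof (cases L)
    case Nil then show ?thesis by simp
  next
    case (Cons a R)
    then have "1 \<le> card F" using val_pos base.prems by (meson order_trans)
    then obtain G where G: "G \<in> F" by (metis card.empty ex_in_conv not_one_le_zero)
    then obtain x where "G = {x}" using base.prems unfolding unif_def by (metis card_1_singletonE)
    then have "{} \<in> shadow F" using G unfolding shadow_def by blast
    then have "1 \<le> card (shadow F)" using finite_shadow[OF base.prems(1)]
      by (metis card_0_eq empty_iff less_one not_le)
    then show ?thesis using Cons by (simp add: val0)
  qed
next
  case (Suc k)
  then show ?case
  proof (induction "card F" arbitrary: F L rule: less_induct)
    case less
    show ?case
    proof (cases L)
      case Nil then show ?thesis by simp
    next
      case (Cons a R)
      obtain F' where F': "unif (Suc k) F'" "card F' = card F" "card (shadow F') \<le> card (shadow F)" "stbl F'"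
        using stabilize[OF less.prems(3)] by blast
      have finF': "finite F'" using F' unfolding unif_def by auto
      have "1 \<le> val (Suc k) L" using val_pos[of "Suc k" a R] less.prems(4) Cons by simp
      then have "1 \<le> card F'" using less.prems(5) F'(2) by linarith
      then have neF: "F' \<noteq> {}" by auto
      have lne: "lnk F' \<noteq> {}" using lnk_nonempty[OF F'(4) F'(1) _ neF] by simp
      have ulnk: "unif k (lnk F')" using unif_lnk[OF F'(1)] by simp
      have finl: "finite (lnk F')" using ulnk unfolding unif_def by auto
      have cs: "card F' = card (lnk F') + card (rst F')" using card_split[OF finF'] .
      have ge1: "\<forall>y\<in>set (take (Suc k) L). 1 \<le> y" using valid_ge1[OF less.prems(4)] .
      have pas: "val (Suc k) L = val k (dec L) + val (Suc k) (dec L)"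
        using pascal[OF _ ge1] by simp
      have claim: "val k (dec L) \<le> card (lnk F')"
      proof (rule ccontr)
        assume "\<not> ?thesis"
        then have lt: "card (lnk F') < val k (dec L)" by simp
        have "val (Suc k) (dec L) < card (rst F')" using lt pas cs F'(2) less.prems(5) by linarith
        obtain L' where L': "valid (Suc k) L'" "val (Suc k) L' \<le> val (Suc k) (dec L) + 1"
          "val k (dec L) \<le> val k L'"
          using wlist[OF _ less.prems(4)] by auto
        have c1: "card (rst F') < card F" using cs F'(2) lne finl by (simp add: card_gt_0_iff)
        have "val k L' \<le> card (shadow (rst F'))"
          using less.hyps[OF c1 less.prems(1,2) unif_rst[OF F'(1)] L'(1)]
             \<open>val (Suc k) (dec L) < card (rst F')\<close> L'(2) by simp
        also have "\<dots> \<le> card (lnk F')" using shadow_rst[OF F'(4)] finl by (rule card_mono[rotated])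
        finally show False using L'(3) lt by simp
      qed
      have vd: "valid k (dec (take (Suc k) L))" using valid_dec[OF _ less.prems(4)] by simp
      have e1: "val k (dec (take (Suc k) L)) = val k (dec L)"
        by (simp add: take_dec[symmetric] val_take)
      have e2: "val (k - 1) (dec (take (Suc k) L)) = val (k - 1) (dec L)"
        using less.prems(1) by (simp add: take_dec[symmetric] val_take)
      have "val (k - 1) (dec L) \<le> card (shadow (lnk F'))"
        using less.prems(2)[OF ulnk vd] e1 e2 claim by simp
      moreover have "val k L = val (k - 1) (dec L) + val k (dec L)"
      proof -
        have "set (take k L) \<subseteq> set (take (Suc k) L)" by (rule set_take_subset_set_take) simp
        then have "\<forall>y\<in>set (take k L). 1 \<le> y" using ge1 by blast
        then show ?thesis using pascal[OF less.prems(1)] by blast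
      qed
      ultimately show ?thesis using shadow_lower[OF F'(1)] claim F'(3) by simp
    qed
  qed
qed

definition cl :: "nat \<Rightarrow> nat set \<Rightarrow> nat set set \<Rightarrow> nat set set" where
  "cl t V E = {S. S \<subseteq> V \<and> card S = t \<and> (\<forall>a\<in>S. \<forall>b\<in>S. a \<noteq> b \<longrightarrow> {a, b} \<in> E)}"

lemma kcount_cl: "kcount t V E = card (cl t V E)"
  by (simp add: kcount_def cl_def)

lemma unif_cl: assumes "finite V" shows "unif t (cl t V E)"
proof -
  have "cl t V E \<subseteq> Pow V" unfolding cl_def by blast
  then have "finite (cl t V E)" using assms by (meson finite_Pow_iff finite_subset)
  moreover have "\<forall>S\<in>cl t V E. finite S \<and> card S = t"
    unfolding cl_def using assms by (auto intro: finite_subset)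
  ultimately show ?thesis unfolding unif_def by blast
qed

lemma shadow_cl: "shadow (cl (Suc t) V E) \<subseteq> cl t V E"
proof
  fix H assume "H \<in> shadow (cl (Suc t) V E)"
  then obtain S x where S: "S \<in> cl (Suc t) V E" "x \<in> S" "H = S - {x}" unfolding shadow_def by blast
  have "S \<subseteq> V" "card S = Suc t" "\<forall>a\<in>S. \<forall>b\<in>S. a \<noteq> b \<longrightarrow> {a, b} \<in> E"
    using S(1) unfolding cl_def by auto
  moreover have "finite S" using \<open>card S = Suc t\<close> by (intro card_ge_0_finite) simp
  ultimately show "H \<in> cl t V E" using S(2,3) unfolding cl_def by auto
qed

lemma iterate:
  assumes "finite V" "1 \<le> r" "r \<le> s" "\<forall>j. r < j \<and> j \<le> s \<longrightarrow> valid j L"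
    "val s L \<le> kcount s V E"
  shows "d \<le> s - r \<Longrightarrow> val (s - d) L \<le> kcount (s - d) V E"
proof (induction d)
  case 0 then show ?case using assms(5) by simp
next
  case (Suc d)
  define k where "k = s - d"
  have k1: "r < k" "k \<le> s" using Suc.prems k_def by auto
  have kd: "s - Suc d = k - 1" using k_def by simp
  have "val k L \<le> card (cl k V E)" using Suc k_def by (simp add: kcount_cl)
  then have "val (k - 1) L \<le> card (shadow (cl k V E))"
    using KK[of k "cl k V E" L] k1 assms(2,4) unif_cl[OF assms(1)] by simp
  also have "\<dots> \<le> card (cl (k - 1) V E)"
  proof (rule card_mono)
    show "finite (cl (k - 1) V E)" using unif_cl[OF assms(1)] unfolding unif_def by blast
    show "shadow (cl k V E) \<subseteq> cl (k - 1) V E" using shadow_cl[of "k - 1" V E] k1 assms(2) by simp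
  qed
  finally show ?case using kd by (simp add: kcount_cl)
qed

lemma choose_lower: "1 \<le> k \<Longrightarrow> k \<le> a \<Longrightarrow> a - k < a choose k"
proof (induction a)
  case 0 then show ?case by simp
next
  case (Suc a)
  obtain k' where k': "k = Suc k'" using Suc.prems by (cases k) auto
  show ?case
  proof (cases "k \<le> a")
    case True
    have "a - k < a choose k" using Suc.IH Suc.prems True by simp
    moreover have "0 < a choose k'" by (rule zero_less_binomial) (use True k' in simp)
    then have "1 \<le> a choose k'" by linarith
    moreover have "Suc a - k = Suc (a - k)" using True by simp
    moreover have "Suc a choose k = (a choose k') + (a choose k)" using k' by simp
    ultimately show ?thesis by linarith
  next
    case False
    then have "k = Suc a" using Suc.prems by simp
    then show ?thesis by simp
  qed
qed

lemma greatest_choose: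
  assumes "1 \<le> k" shows "(GREATEST a. a choose k \<le> x) choose k \<le> x \<and> x < Suc (GREATEST a. a choose k \<le> x) choose k"
proof -
  have bnd: "a \<le> x + k" if "a choose k \<le> x" for a
  proof (rule ccontr)
    assume "\<not> a \<le> x + k"
    then have "k \<le> a" "x < a - k" by auto
    then show False using choose_lower[OF assms \<open>k \<le> a\<close>] that by simp
  qed
  have P0: "(0::nat) choose k \<le> x" using assms by (cases k) auto
  have g: "(GREATEST a. a choose k \<le> x) choose k \<le> x"
    using GreatestI_nat[of "\<lambda>a. a choose k \<le> x", OF P0 bnd] by blast
  have "\<not> Suc (GREATEST a. a choose k \<le> x) choose k \<le> x"
  proof
    assume h: "Suc (GREATEST a. a choose k \<le> x) choose k \<le> x"
    have "Suc (GREATEST a. a choose k \<le> x) \<le> (GREATEST a. a choose k \<le> x)"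
      using Greatest_le_nat[of "\<lambda>a. a choose k \<le> x", OF h bnd] by blast
    then show False by simp
  qed
  then show ?thesis using g by simp
qed

definition EG :: "nat \<Rightarrow> nat \<Rightarrow> nat set set" where
  "EG n m = {{a, b} | a b. a < n \<and> b < n \<and> a \<noteq> b} \<union> {{a, n} | a. a < m}"

lemma EG_simple: "m \<le> n \<Longrightarrow> simple_graph {..n} (EG n m)"
  unfolding simple_graph_def EG_def by auto

lemma edge_n: assumes "b \<noteq> n" "{b, n} \<in> EG n m" shows "b < m"
proof -
  have "\<not> ({b, n} = {a, c} \<and> a < n \<and> c < n)" for a c by (auto simp: doubleton_eq_iff)
  then obtain a where "{b, n} = {a, n}" "a < m" using assms(2) unfolding EG_def by blast
  then show ?thesis using assms(1) by (auto simp: doubleton_eq_iff)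
qed

lemma cl_EG:
  assumes "m < n" "1 \<le> t"
  shows "cl t {..n} (EG n m) = {S. S \<subseteq> {..<n} \<and> card S = t} \<union> insert n ` {S. S \<subseteq> {..<m} \<and> card S = t - 1}"
    (is "?L = ?A \<union> ?B")
proof
  show "?L \<subseteq> ?A \<union> ?B"
  proof
    fix S assume "S \<in> ?L"
    then have S: "S \<subseteq> {..n}" "card S = t" "\<forall>a\<in>S. \<forall>b\<in>S. a \<noteq> b \<longrightarrow> {a, b} \<in> EG n m"
      unfolding cl_def by auto
    show "S \<in> ?A \<union> ?B"
    proof (cases "n \<in> S")
      case False
      then have "S \<subseteq> {..<n}" using S(1) by (auto simp: less_le)
      then show ?thesis using S(2) by blast
    next
      case True
      have fS: "finite S" using S(1) finite_subset by blast
      have "S - {n} \<subseteq> {..<m}"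
      proof
        fix b assume "b \<in> S - {n}"
        then have "b \<noteq> n" "{b, n} \<in> EG n m" using S(3) True by auto
        then show "b \<in> {..<m}" using edge_n by simp
      qed
      moreover have "card (S - {n}) = t - 1" using S(2) True fS by simp
      moreover have "S = insert n (S - {n})" using True by blast
      ultimately show ?thesis by blast
    qed
  qed
next
  show "?A \<union> ?B \<subseteq> ?L"
  proof
    fix S assume "S \<in> ?A \<union> ?B"
    then show "S \<in> ?L"
    proof
      assume "S \<in> ?A"
      then have S: "S \<subseteq> {..<n}" "card S = t" by auto
      have "\<forall>a\<in>S. \<forall>b\<in>S. a \<noteq> b \<longrightarrow> {a, b} \<in> EG n m"
        using S(1) unfolding EG_def by blast
      then show ?thesis using S unfolding cl_def by auto
    next
      assume "S \<in> ?B"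
      then obtain T where T: "T \<subseteq> {..<m}" "card T = t - 1" "S = insert n T" by blast
      have fT: "finite T" using T(1) finite_subset by blast
      have nT: "n \<notin> T" using T(1) assms(1) by auto
      have "card S = t" using T fT nT assms(2) by simp
      moreover have "S \<subseteq> {..n}" using T(1,3) assms(1) by auto
      moreover have "\<forall>a\<in>S. \<forall>b\<in>S. a \<noteq> b \<longrightarrow> {a, b} \<in> EG n m"
      proof (intro ballI impI)
        fix a b assume ab: "a \<in> S" "b \<in> S" "a \<noteq> b"
        show "{a, b} \<in> EG n m"
        proof (cases "a = n")
          case True
          then have "b \<in> T" "b < m" using ab T by auto
          then have "{b, n} \<in> EG n m" unfolding EG_def by blast
          then show ?thesis using True by (simp add: insert_commute)
        next
          case False
          then have a: "a \<in> T" "a < m" using ab T by auto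
          show ?thesis
          proof (cases "b = n")
            case True
            then show ?thesis using a unfolding EG_def by blast
          next
            case False
            then have "b < m" using ab T by auto
            then show ?thesis using a ab(3) assms(1) unfolding EG_def by auto
          qed
        qed
      qed
      ultimately show ?thesis unfolding cl_def by blast
    qed
  qed
qed

lemma kcount_EG:
  assumes "m < n" "1 \<le> t"
  shows "kcount t {..n} (EG n m) = (n choose t) + (m choose (t - 1))"
proof -
  let ?A = "{S. S \<subseteq> {..<n} \<and> card S = t}" and ?T = "{S. S \<subseteq> {..<m} \<and> card S = t - 1}"
  have fA: "finite ?A" by (rule finite_subset[of _ "Pow {..<n}"]) auto
  have fT: "finite ?T" by (rule finite_subset[of _ "Pow {..<m}"]) auto
  have d: "?A \<inter> insert n ` ?T = {}" by auto
  have inj: "inj_on (insert n) ?T"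
  proof (rule inj_onI)
    fix X Y assume "X \<in> ?T" "Y \<in> ?T" "insert n X = insert n Y"
    moreover have "n \<notin> X" "n \<notin> Y" using calculation(1,2) assms(1) by auto
    ultimately show "X = Y" by (metis Diff_insert_absorb)
  qed
  have "kcount t {..n} (EG n m) = card (?A \<union> insert n ` ?T)"
    using cl_EG[OF assms] by (simp add: kcount_cl)
  also have "\<dots> = card ?A + card (insert n ` ?T)" using fA fT d by (simp add: card_Un_disjoint)
  also have "\<dots> = card ?A + card ?T" using inj by (simp add: card_image)
  also have "\<dots> = (n choose t) + (m choose (t - 1))" using n_subsets[of "{..<n}" t] n_subsets[of "{..<m}" "t - 1"] by simp
  finally show ?thesis .
qed

lemma upper:
  assumes hu: "u > 1" and r: "r = Suc u" and hs: "s \<ge> 2 * u + 2"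
    and n1: "n choose r \<le> x" and n2: "x < Suc n choose r"
    and m1: "m choose u \<le> x - (n choose r)"
    and x2: "x - (n choose r) - (m choose u) < (2 * u) choose (u - 1)"
    and mn: "m < n"
    and G: "simple_graph V E" "kcount r V E \<le> x"
  shows "kcount s V E \<le> (n choose s) + (m choose (s - 1))"
proof (rule ccontr)
  assume "\<not> ?thesis"
  then have big: "(n choose s) + (m choose (s - 1)) + 1 \<le> kcount s V E" by simp
  have finV: "finite V" using G(1) unfolding simple_graph_def by blast
  have r1: "1 \<le> r" "r \<le> s" using r hs hu by auto
  obtain u1 where u1: "u = Suc u1" "1 \<le> u1" using hu by (cases u) auto
  have xeq: "x = (n choose r) + (m choose u) + (x - (n choose r) - (m choose u))" using n1 m1 by simp
  have c2: "(2 * u) choose (u - 1) \<le> (s - 2) choose (u - 1)" using hs hu by (intro binomial_right_mono) simp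
  obtain L where L: "\<forall>j. r < j \<and> j \<le> s \<longrightarrow> valid j L" "val s L \<le> kcount s V E" "x < val r L"
  proof (cases "s - 1 \<le> m")
    case True
    let ?L = "[n, m, s - 2]"
    have "\<forall>j. r < j \<and> j \<le> s \<longrightarrow> valid j ?L"
    proof (intro allI impI)
      fix j assume j: "r < j \<and> j \<le> s"
      obtain j1 where j1: "j = Suc (Suc (Suc j1))" using j r u1 by (cases j; cases "j - 1"; cases "j - 2") auto
      show "valid j ?L" using j1 j True mn hs hu by auto
    qed
    moreover have "val s ?L = (n choose s) + (m choose (s - 1)) + 1"
    proof -
      obtain s1 where "s = Suc (Suc (Suc s1))" using hs hu by (cases s; cases "s - 1"; cases "s - 2") auto
      then show ?thesis by simp
    qed
    moreover have "val r ?L = (n choose r) + (m choose u) + ((s - 2) choose (u - 1))"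
      using r u1 by simp
    moreover have "x < (n choose r) + (m choose u) + ((s - 2) choose (u - 1))"
      using xeq x2 c2 by linarith
    ultimately show ?thesis using that big by (metis add_leD1 le_trans)
  next
    case False
    then have ms: "m \<le> s - 2" by simp
    show ?thesis
    proof (cases "s \<le> n")
      case True
      let ?L = "[n, s - 1]"
      have "\<forall>j. r < j \<and> j \<le> s \<longrightarrow> valid j ?L"
      proof (intro allI impI)
        fix j assume j: "r < j \<and> j \<le> s"
        obtain j1 where j1: "j = Suc (Suc j1)" using j r u1 by (cases j; cases "j - 1") auto
        show "valid j ?L" using j1 j True hs hu by auto
      qed
      moreover have "m choose (s - 1) = 0" using False by simp
      moreover have "val s ?L = (n choose s) + 1"
      proof -
        obtain s1 where "s = Suc (Suc s1)" using hs hu by (cases s; cases "s - 1") auto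
        then show ?thesis by simp
      qed
      moreover have "val r ?L = (n choose r) + ((s - 1) choose u)"
        using r u1 by simp
      moreover have e5: "(s - 1) choose u = ((s - 2) choose (u - 1)) + ((s - 2) choose u)"
      proof -
        have "s - 1 = Suc (s - 2)" using hs hu by simp
        then show ?thesis using u1 by simp
      qed
      moreover have e6: "m choose u \<le> (s - 2) choose u" using ms by (rule binomial_right_mono)
      moreover have "x < (n choose r) + ((s - 1) choose u)"
        using xeq x2 c2 e5 e6 by linarith
      ultimately show ?thesis using that big by (metis add.right_neutral)
    next
      case False
      let ?L = "[s]"
      have "\<forall>j. r < j \<and> j \<le> s \<longrightarrow> valid j ?L"
      proof (intro allI impI)
        fix j assume j: "r < j \<and> j \<le> s"
        obtain j1 where j1: "j = Suc j1" using j by (cases j) auto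
        show "valid j ?L" using j1 j by auto
      qed
      moreover have "n choose s = 0" "m choose (s - 1) = 0" using False mn by auto
      moreover have "val s ?L = 1" using hs hu by simp
      moreover have "val r ?L = s choose r" by simp
      moreover have "Suc n choose r \<le> s choose r" using False by (intro binomial_right_mono) simp
      ultimately show ?thesis using that big n2 by (metis add_0 le_trans less_le_trans)
    qed
  qed
  have "val (s - (s - r)) L \<le> kcount (s - (s - r)) V E"
    using iterate[OF finV r1 L(1,2)] by simp
  then have "val r L \<le> kcount r V E" using r1 by simp
  then show False using L(3) G(2) by linarith
qed

theorem corollary1:
  fixes u r s x n m :: nat
  assumes "u > 1"
    and "r = u + 1"
    and "s \<ge> 2 * u + 2"
    and "canon r x = [n, m, 2 * u - 1]"
  shows "\<forall>y::nat. (n choose r) + (m choose (r - 1)) \<le> y \<and> y \<le> x \<longrightarrow>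
           kmax s r y = (n choose s) + (m choose (s - 1))"
proof (intro allI impI)
  fix y assume y: "(n choose r) + (m choose (r - 1)) \<le> y \<and> y \<le> x"
  obtain u1 where u1: "u = Suc u1" "1 \<le> u1" using assms(1) by (cases u) auto
  obtain u2 where u2: "u1 = Suc u2" using u1 by (cases u1) auto
  have r: "r = Suc u" using assms(2) by simp
  define x1 where "x1 = x - (n choose r)"
  define x2 where "x2 = x1 - (m choose u)"
  have x0: "x \<noteq> 0" using assms(4) r by (cases x) auto
  define g1 where "g1 = (GREATEST a. a choose r \<le> x)"
  have "canon r x = g1 # canon u (x - (g1 choose r))" using x0 r unfolding g1_def by (simp add: Let_def)
  then have "g1 = n" "canon u (x - (g1 choose r)) = [m, 2 * u - 1]" using assms(4) by simp_all
  then have c1: "(GREATEST a. a choose r \<le> x) = n" "canon u x1 = [m, 2 * u - 1]"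
    unfolding x1_def g1_def by simp_all
  have x10: "x1 \<noteq> 0" using c1(2) u1 by (cases x1) auto
  define g2 where "g2 = (GREATEST a. a choose u \<le> x1)"
  have "canon u x1 = g2 # canon u1 (x1 - (g2 choose u))" using x10 u1 unfolding g2_def by (simp add: Let_def)
  then have "g2 = m" "canon u1 (x1 - (g2 choose u)) = [2 * u - 1]" using c1(2) by simp_all
  then have c2: "(GREATEST a. a choose u \<le> x1) = m" "canon u1 x2 = [2 * u - 1]"
    unfolding x2_def g2_def by simp_all
  have x20: "x2 \<noteq> 0" using c2(2) u2 by (cases x2) auto
  define g3 where "g3 = (GREATEST a. a choose u1 \<le> x2)"
  have "canon u1 x2 = g3 # canon u2 (x2 - (g3 choose u1))" using x20 u2 unfolding g3_def by (simp add: Let_def)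
  then have c3: "(GREATEST a. a choose u1 \<le> x2) = 2 * u - 1" using c2(2) unfolding g3_def by simp
  have n12: "n choose r \<le> x" "x < Suc n choose r"
    using greatest_choose[of r x] c1 r by auto
  have m1: "m choose u \<le> x1" using greatest_choose[of u x1] c2 u1 by auto
  have x2b: "x2 < Suc (2 * u - 1) choose u1" using greatest_choose[of u1 x2] c3 u1 by auto
  have "Suc (2 * u - 1) = 2 * u" using u1 by simp
  then have x2c: "x - (n choose r) - (m choose u) < (2 * u) choose (u - 1)"
    using x2b u1 unfolding x2_def x1_def by simp
  have mn: "m < n"
  proof (rule ccontr)
    assume "\<not> m < n"
    then have "n choose u \<le> m choose u" by (intro binomial_right_mono) simp
    moreover have "Suc n choose r = (n choose u) + (n choose r)" using r by simp
    ultimately show False using m1 n12 unfolding x1_def by linarith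
  qed
  let ?S = "{kcount s V E | V E. simple_graph V E \<and> kcount r V E \<le> y}"
  let ?B = "(n choose s) + (m choose (s - 1))"
  have "?B \<in> ?S"
  proof -
    have "kcount r {..n} (EG n m) = (n choose r) + (m choose (r - 1))"
      using kcount_EG[OF mn] r by simp
    moreover have "kcount s {..n} (EG n m) = ?B" using kcount_EG[OF mn] assms(3) by simp
    moreover have "simple_graph {..n} (EG n m)" using EG_simple mn by simp
    ultimately show ?thesis using y by force
  qed
  moreover have "z \<le> ?B" if zS: "z \<in> ?S" for z
  proof -
    obtain V E where VE: "z = kcount s V E" "simple_graph V E" "kcount r V E \<le> y" using zS by blast
    have "kcount s V E \<le> ?B"
      using upper[OF assms(1) r assms(3) n12 m1[unfolded x1_def] x2c mn VE(2)] VE(3) y by simp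
    then show ?thesis using VE(1) by simp
  qed
  ultimately show "kmax s r y = ?B" unfolding kmax_def by (rule cSup_eq_maximum)
qed

end
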